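(* Let $\Sigma$ be a finite alphabet. A set $S$ of unranked trees over $\Sigma$ is definable by a $<$-invariant MSO sentence over the class of all unranked trees over $\Sigma$ if and only if it is definable by a sibling-order-invariant MSO sentence over the class of all unranked trees over $\Sigma$.
   Context: An unranked tree domain $D$ is a finite prefix-closed set of words over the positive integers such that $s\cdot i\in D$ implies $s\cdot j\in D$ for all $1\le j<i$. An unranked tree over $\Sigma$ is a structure $T=(D,\prec,(P_a)_{a\in\Sigma})$ where $D$ is an unranked tree domain, $\prec$ is the descendant relation ($s\prec s\cdot s'$ for $s\cdot s'\in D$ with $s'$ nonempty), and the sets $P_a$ partition $D$ (node labels). A sibling order on $T$ is a binary relation $\triangleleft$ such that $s'\triangleleft s''$ implies $s'=s\cdot i$, $s''=s\cdot j$ for some node $s$ and distinct $i,j$, and such that $\triangleleft$ restricted to the children of each node is a linear order. An MSO sentence $\varphi$ over the tree vocabulary plus a binary symbol $<$ is $<$-invariant over trees if for every unranked tree $T$ and any two linear orders $<_1,<_2$ of $\mathrm{dom}(T)$, $(T,<_1)\models\varphi$ iff $(T,<_2)\models\varphi$; it then defines the set of trees $T$ with $(T,<)\models\varphi$ for some (equivalently every) linear order $<$. Sibling-order-invariant MSO sentences (over the tree vocabulary plus a binary symbol $\triangleleft$) and the sets they define are defined in the same way, with linear orders replaced by sibling orders. *)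

theory Defs
  imports Main
begin

definition tree_domain :: "nat list set \<Rightarrow> bool" where
  "tree_domain D \<longleftrightarrow>
     finite D \<and> [] \<in> D \<and>
     (\<forall>s\<in>D. \<forall>i\<in>set s. 1 \<le> i) \<and>
     (\<forall>s t. s @ t \<in> D \<longrightarrow> s \<in> D) \<and>
     (\<forall>s i j. s @ [i] \<in> D \<longrightarrow> 1 \<le> j \<longrightarrow> j < i \<longrightarrow> s @ [j] \<in> D)"

text \<open>An unranked tree over the alphabet 'a: a domain D and the label predicates P_a,
  which partition D.\<close>

type_synonym 'a utree = "nat list set \<times> ('a \<Rightarrow> nat list set)"

definition dom_t :: "'a utree \<Rightarrow> nat list set" where
  "dom_t T = fst T"

definition lab_t :: "'a utree \<Rightarrow> 'a \<Rightarrow> nat list set" where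
  "lab_t T = snd T"

definition is_utree :: "'a utree \<Rightarrow> bool" where
  "is_utree T \<longleftrightarrow> tree_domain (dom_t T) \<and>
     (\<Union>a. lab_t T a) = dom_t T \<and>
     (\<forall>a b. a \<noteq> b \<longrightarrow> lab_t T a \<inter> lab_t T b = {})"

definition desc :: "nat list \<Rightarrow> nat list \<Rightarrow> bool" where
  "desc s t \<longleftrightarrow> (\<exists>s'. s' \<noteq> [] \<and> t = s @ s')"

definition children :: "nat list set \<Rightarrow> nat list \<Rightarrow> nat list set" where
  "children D s = {t \<in> D. \<exists>i. t = s @ [i]}"

definition linord_of :: "'a utree \<Rightarrow> (nat list \<times> nat list) set \<Rightarrow> bool" where
  "linord_of T R \<longleftrightarrow> R \<subseteq> dom_t T \<times> dom_t T \<and> strict_linear_order_on (dom_t T) R"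

definition sibord_of :: "'a utree \<Rightarrow> (nat list \<times> nat list) set \<Rightarrow> bool" where
  "sibord_of T R \<longleftrightarrow> R \<subseteq> dom_t T \<times> dom_t T \<and>
     (\<forall>(u, v)\<in>R. \<exists>s i j. s \<in> dom_t T \<and> u = s @ [i] \<and> v = s @ [j] \<and> i \<noteq> j) \<and>
     (\<forall>s\<in>dom_t T. strict_linear_order_on (children (dom_t T) s)
                     (R \<inter> (children (dom_t T) s \<times> children (dom_t T) s)))"

text \<open>First-order variables and second-order (set) variables are indexed by nat.
  Rel x y is the additional binary symbol (< resp. the sibling order).\<close>

datatype 'a mso =
    Desc nat nat
  | Lab 'a nat
  | Rel nat nat
  | Eq nat nat
  | Mem nat nat
  | Neg "'a mso"
  | Conj "'a mso" "'a mso"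
  | Disj "'a mso" "'a mso"
  | Ex1 nat "'a mso"
  | Ex2 nat "'a mso"

fun fv1 :: "'a mso \<Rightarrow> nat set" where
  "fv1 (Desc x y) = {x, y}"
| "fv1 (Lab a x) = {x}"
| "fv1 (Rel x y) = {x, y}"
| "fv1 (Eq x y) = {x, y}"
| "fv1 (Mem x X) = {x}"
| "fv1 (Neg \<phi>) = fv1 \<phi>"
| "fv1 (Conj \<phi> \<psi>) = fv1 \<phi> \<union> fv1 \<psi>"
| "fv1 (Disj \<phi> \<psi>) = fv1 \<phi> \<union> fv1 \<psi>"
| "fv1 (Ex1 x \<phi>) = fv1 \<phi> - {x}"
| "fv1 (Ex2 X \<phi>) = fv1 \<phi>"

fun fv2 :: "'a mso \<Rightarrow> nat set" where
  "fv2 (Desc x y) = {}"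
| "fv2 (Lab a x) = {}"
| "fv2 (Rel x y) = {}"
| "fv2 (Eq x y) = {}"
| "fv2 (Mem x X) = {X}"
| "fv2 (Neg \<phi>) = fv2 \<phi>"
| "fv2 (Conj \<phi> \<psi>) = fv2 \<phi> \<union> fv2 \<psi>"
| "fv2 (Disj \<phi> \<psi>) = fv2 \<phi> \<union> fv2 \<psi>"
| "fv2 (Ex1 x \<phi>) = fv2 \<phi>"
| "fv2 (Ex2 X \<phi>) = fv2 \<phi> - {X}"

definition sentence :: "'a mso \<Rightarrow> bool" where
  "sentence \<phi> \<longleftrightarrow> fv1 \<phi> = {} \<and> fv2 \<phi> = {}"

fun sat :: "'a utree \<Rightarrow> (nat list \<times> nat list) set \<Rightarrow> (nat \<Rightarrow> nat list) \<Rightarrow>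
            (nat \<Rightarrow> nat list set) \<Rightarrow> 'a mso \<Rightarrow> bool" where
  "sat T R v V (Desc x y) = desc (v x) (v y)"
| "sat T R v V (Lab a x) = (v x \<in> lab_t T a)"
| "sat T R v V (Rel x y) = ((v x, v y) \<in> R)"
| "sat T R v V (Eq x y) = (v x = v y)"
| "sat T R v V (Mem x X) = (v x \<in> V X)"
| "sat T R v V (Neg \<phi>) = (\<not> sat T R v V \<phi>)"
| "sat T R v V (Conj \<phi> \<psi>) = (sat T R v V \<phi> \<and> sat T R v V \<psi>)"
| "sat T R v V (Disj \<phi> \<psi>) = (sat T R v V \<phi> \<or> sat T R v V \<psi>)"
| "sat T R v V (Ex1 x \<phi>) = (\<exists>u\<in>dom_t T. sat T R (v(x := u)) V \<phi>)"
| "sat T R v V (Ex2 X \<phi>) = (\<exists>U. U \<subseteq> dom_t T \<and> sat T R v (V(X := U)) \<phi>)"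

text \<open>Satisfaction of a sentence in the expanded structure (T, R); the assignment is
  irrelevant for sentences.\<close>

definition models :: "'a utree \<Rightarrow> (nat list \<times> nat list) set \<Rightarrow> 'a mso \<Rightarrow> bool" where
  "models T R \<phi> \<longleftrightarrow> sat T R (\<lambda>_. []) (\<lambda>_. {}) \<phi>"

definition order_invariant :: "'a mso \<Rightarrow> bool" where
  "order_invariant \<phi> \<longleftrightarrow> (\<forall>T R1 R2. is_utree T \<longrightarrow> linord_of T R1 \<longrightarrow> linord_of T R2 \<longrightarrow>
      (models T R1 \<phi> \<longleftrightarrow> models T R2 \<phi>))"

definition sibling_invariant :: "'a mso \<Rightarrow> bool" where
  "sibling_invariant \<phi> \<longleftrightarrow> (\<forall>T R1 R2. is_utree T \<longrightarrow> sibord_of T R1 \<longrightarrow> sibord_of T R2 \<longrightarrow>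
      (models T R1 \<phi> \<longleftrightarrow> models T R2 \<phi>))"

definition order_inv_definable :: "'a utree set \<Rightarrow> bool" where
  "order_inv_definable S \<longleftrightarrow> (\<exists>\<phi>. sentence \<phi> \<and> order_invariant \<phi> \<and>
      S = {T. is_utree T \<and> (\<exists>R. linord_of T R \<and> models T R \<phi>)})"

definition sibling_inv_definable :: "'a utree set \<Rightarrow> bool" where
  "sibling_inv_definable S \<longleftrightarrow> (\<exists>\<phi>. sentence \<phi> \<and> sibling_invariant \<phi> \<and>
      S = {T. is_utree T \<and> (\<exists>R. sibord_of T R \<and> models T R \<phi>)})"

end

theory Submission
  imports Defs
begin

fun trR :: "(nat \<Rightarrow> nat \<Rightarrow> 'a mso) \<Rightarrow> 'a mso \<Rightarrow> 'a mso" where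
  "trR f (Rel x y) = f x y"
| "trR f (Neg \<phi>) = Neg (trR f \<phi>)"
| "trR f (Conj \<phi> \<psi>) = Conj (trR f \<phi>) (trR f \<psi>)"
| "trR f (Disj \<phi> \<psi>) = Disj (trR f \<phi>) (trR f \<psi>)"
| "trR f (Ex1 x \<phi>) = Ex1 x (trR f \<phi>)"
| "trR f (Ex2 X \<phi>) = Ex2 X (trR f \<phi>)"
| "trR f (Desc x y) = Desc x y"
| "trR f (Lab a x) = Lab a x"
| "trR f (Eq x y) = Eq x y"
| "trR f (Mem x X) = Mem x X"

lemma trR_fv:
  assumes "\<And>x y. fv1 (f x y) = {x, y} \<and> fv2 (f x y) = {}"
  shows "fv1 (trR f \<phi>) = fv1 \<phi> \<and> fv2 (trR f \<phi>) = fv2 \<phi>"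
  using assms by (induction \<phi>) auto

lemma trR_sat:
  assumes "\<And>v V x y. (\<forall>z. v z \<in> dom_t T) \<Longrightarrow> sat T R v V (f x y) = ((v x, v y) \<in> Q)"
  shows "(\<forall>z. v z \<in> dom_t T) \<Longrightarrow> sat T R v V (trR f \<phi>) = sat T Q v V \<phi>"
proof (induction \<phi> arbitrary: v V)
  case (Ex1 x \<phi>)
  have h: "sat T R (v(x := u)) V (trR f \<phi>) = sat T Q (v(x := u)) V \<phi>" if "u \<in> dom_t T" for u
    using Ex1.prems that by (intro Ex1.IH) simp
  show ?case by (simp only: sat.simps trR.simps) (use h in blast)
next
  case (Ex2 X \<phi>)
  show ?case by (simp only: sat.simps trR.simps) (use Ex2 in blast)
qed (use assms in simp_all)

lemma trR_models:
  assumes "is_utree T"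
    and "\<And>v V x y. (\<forall>z. v z \<in> dom_t T) \<Longrightarrow> sat T R v V (f x y) = ((v x, v y) \<in> Q)"
  shows "models T R (trR f \<phi>) = models T Q \<phi>"
proof -
  have "[] \<in> dom_t T" using assms(1) by (simp add: is_utree_def tree_domain_def)
  then show ?thesis unfolding models_def using trR_sat[OF assms(2)] by auto
qed

lemma pref_closed: "is_utree T \<Longrightarrow> s @ t \<in> dom_t T \<Longrightarrow> s \<in> dom_t T"
  unfolding is_utree_def tree_domain_def by blast

lemma root_in: "is_utree T \<Longrightarrow> [] \<in> dom_t T"
  by (simp add: is_utree_def tree_domain_def)

section \<open>Restriction to siblings\<close>

definition Par :: "nat \<Rightarrow> nat \<Rightarrow> nat \<Rightarrow> 'a mso" where
  "Par w z x = Conj (Desc z x) (Neg (Ex1 w (Conj (Desc z w) (Desc w x))))"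

definition sibf :: "nat \<Rightarrow> nat \<Rightarrow> 'a mso" where
  "sibf x y = Conj (Rel x y) (Conj (Neg (Eq x y))
     (Ex1 (x+y+1) (Conj (Par (x+y+2) (x+y+1) x) (Par (x+y+2) (x+y+1) y))))"

definition Q1 :: "(nat list \<times> nat list) set \<Rightarrow> (nat list \<times> nat list) set" where
  "Q1 R = {(u, w) \<in> R. \<exists>s i j. u = s @ [i] \<and> w = s @ [j] \<and> i \<noteq> j}"

lemma parent_iff:
  assumes "is_utree T" "u \<in> dom_t T"
  shows "(desc p u \<and> \<not> (\<exists>w\<in>dom_t T. desc p w \<and> desc w u)) \<longleftrightarrow> (\<exists>i. u = p @ [i])"
proof
  assume a: "desc p u \<and> \<not> (\<exists>w\<in>dom_t T. desc p w \<and> desc w u)"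
  then obtain s' where s': "s' \<noteq> []" "u = p @ s'" by (auto simp: desc_def)
  show "\<exists>i. u = p @ [i]"
  proof (cases s')
    case (Cons a r)
    show ?thesis
    proof (cases r)
      case Nil then show ?thesis using Cons s' by auto
    next
      case (Cons b r')
      have "p @ [a] \<in> dom_t T"
        using pref_closed[OF assms(1), of "p @ [a]" "b # r'"] assms(2) s' Cons \<open>s' = a # r\<close> by simp
      moreover have "desc p (p @ [a])" "desc (p @ [a]) u"
        using s' Cons \<open>s' = a # r\<close> by (auto simp: desc_def)
      ultimately show ?thesis using a by blast
    qed
  qed (use s' in auto)
next
  assume "\<exists>i. u = p @ [i]"
  then obtain i where u: "u = p @ [i]" by blast
  have "\<not> (desc p w \<and> desc w u)" for w
  proof
    assume "desc p w \<and> desc w u"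
    then obtain a b where "a \<noteq> []" "b \<noteq> []" "w = p @ a" "u = w @ b" by (auto simp: desc_def)
    then have "[i] = a @ b" using u by simp
    then show False using \<open>a \<noteq> []\<close> \<open>b \<noteq> []\<close> by (cases a) auto
  qed
  then show "desc p u \<and> \<not> (\<exists>w\<in>dom_t T. desc p w \<and> desc w u)"
    using u by (auto simp: desc_def)
qed

lemma sat_sibf:
  assumes "is_utree T" "\<forall>z. v z \<in> dom_t T"
  shows "sat T R v V (sibf x y) = ((v x, v y) \<in> Q1 R)"
proof -
  have e: "sat T R v V (sibf x y) \<longleftrightarrow> (v x, v y) \<in> R \<and> v x \<noteq> v y \<and>
     (\<exists>p\<in>dom_t T. (desc p (v x) \<and> \<not> (\<exists>w\<in>dom_t T. desc p w \<and> desc w (v x))) \<and>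
                  (desc p (v y) \<and> \<not> (\<exists>w\<in>dom_t T. desc p w \<and> desc w (v y))))"
    by (simp add: sibf_def Par_def)
  have px: "(desc p (v x) \<and> \<not> (\<exists>w\<in>dom_t T. desc p w \<and> desc w (v x))) \<longleftrightarrow> (\<exists>i. v x = p @ [i])" for p
    using parent_iff[OF assms(1)] assms(2) by blast
  have py: "(desc p (v y) \<and> \<not> (\<exists>w\<in>dom_t T. desc p w \<and> desc w (v y))) \<longleftrightarrow> (\<exists>i. v y = p @ [i])" for p
    using parent_iff[OF assms(1)] assms(2) by blast
  have "sat T R v V (sibf x y) \<longleftrightarrow> (v x, v y) \<in> R \<and> v x \<noteq> v y \<and>
     (\<exists>p\<in>dom_t T. (\<exists>i. v x = p @ [i]) \<and> (\<exists>j. v y = p @ [j]))"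
    unfolding e px py by blast
  also have "\<dots> \<longleftrightarrow> (v x, v y) \<in> Q1 R"
  proof
    assume "(v x, v y) \<in> Q1 R"
    then obtain s i j where "(v x, v y) \<in> R" "v x = s @ [i]" "v y = s @ [j]" "i \<noteq> j"
      unfolding Q1_def by auto
    moreover have "s @ [i] \<in> dom_t T" using assms(2) \<open>v x = s @ [i]\<close> by metis
    then have "s \<in> dom_t T" by (rule pref_closed[OF assms(1)])
    ultimately show "(v x, v y) \<in> R \<and> v x \<noteq> v y \<and>
     (\<exists>p\<in>dom_t T. (\<exists>i. v x = p @ [i]) \<and> (\<exists>j. v y = p @ [j]))" by auto
  qed (auto simp: Q1_def)
  finally show ?thesis .
qed

section \<open>Document order\<close>

definition docf :: "nat \<Rightarrow> nat \<Rightarrow> 'a mso" where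
  "docf x y = Disj (Desc x y) (Ex1 (x+y+1) (Ex1 (x+y+2) (Conj (Rel (x+y+1) (x+y+2))
     (Conj (Disj (Eq (x+y+1) x) (Desc (x+y+1) x)) (Disj (Eq (x+y+2) y) (Desc (x+y+2) y))))))"

definition Q2 :: "nat list set \<Rightarrow> (nat list \<times> nat list) set \<Rightarrow> (nat list \<times> nat list) set" where
  "Q2 D R = {(u, w). u \<in> D \<and> w \<in> D \<and> (desc u w \<or>
     (\<exists>a\<in>D. \<exists>b\<in>D. (a, b) \<in> R \<and> (a = u \<or> desc a u) \<and> (b = w \<or> desc b w)))}"

lemma sat_docf:
  assumes "\<forall>z. v z \<in> dom_t T"
  shows "sat T R v V (docf x y) = ((v x, v y) \<in> Q2 (dom_t T) R)"
  using assms by (simp add: docf_def Q2_def)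


section \<open>Linear order from sibling order\<close>

definition L :: "(nat list \<times> nat list) set \<Rightarrow> nat list \<Rightarrow> nat list \<Rightarrow> bool" where
  "L R u w \<longleftrightarrow> (\<exists>t. t \<noteq> [] \<and> w = u @ t) \<or>
     (\<exists>s i j t1 t2. (s @ [i], s @ [j]) \<in> R \<and> u = s @ [i] @ t1 \<and> w = s @ [j] @ t2)"

lemma L_irr:
  assumes "\<And>a. (a, a) \<notin> R"
  shows "\<not> L R u u"
  using assms unfolding L_def by auto

lemma L_I1: "t \<noteq> [] \<Longrightarrow> w = u @ t \<Longrightarrow> L R u w"
  unfolding L_def by blast

lemma L_I2: "(s @ [i], s @ [j]) \<in> R \<Longrightarrow> u = s @ [i] @ t1 \<Longrightarrow> w = s @ [j] @ t2 \<Longrightarrow> L R u w"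
  unfolding L_def by blast

lemma L_trans:
  assumes Rt: "\<And>s i j k. (s @ [i], s @ [j]) \<in> R \<Longrightarrow> (s @ [j], s @ [k]) \<in> R \<Longrightarrow> (s @ [i], s @ [k]) \<in> R"
    and xy: "L R x y" and yz: "L R y z"
  shows "L R x z"
  using xy[unfolded L_def]
proof (elim disjE exE conjE)
  fix t assume t: "t \<noteq> []" "y = x @ t"
  from yz[unfolded L_def] show ?thesis
  proof (elim disjE exE conjE)
    fix t' assume t': "t' \<noteq> []" "z = y @ t'"
    have "z = x @ (t @ t')" by (simp only: t'(2) t(2) append_assoc)
    moreover have "t @ t' \<noteq> []" using t(1) by simp
    ultimately show ?thesis by (rule L_I1[rotated])
  next
    fix s i j t1 t2 assume b: "(s @ [i], s @ [j]) \<in> R" "y = s @ [i] @ t1" "z = s @ [j] @ t2"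
    from t(2)[symmetric] b(2) have "x @ t = s @ ([i] @ t1)" by (rule trans)
    note eq = this
    obtain us where "x = s @ us \<and> us @ t = [i] @ t1 \<or> x @ us = s \<and> t = us @ [i] @ t1"
      using append_eq_append_conv2[THEN iffD1, OF eq] by (elim exE) (rule that)
    then show ?thesis
    proof
      assume h: "x = s @ us \<and> us @ t = [i] @ t1"
      show ?thesis
      proof (cases us)
        case Nil
        then have "x = s" using h by simp
        then have "z = x @ ([j] @ t2)" using b(3) by simp
        then show ?thesis by (rule L_I1[rotated]) simp
      next
        case (Cons c us')
        then have "c = i" "x = s @ (c # us')" using h by simp_all
        then have "x = s @ [i] @ us'" by simp
        from L_I2[OF b(1) this b(3)] show ?thesis .
      qed
    next
      assume h: "x @ us = s \<and> t = us @ [i] @ t1"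
      have "z = x @ (us @ [j] @ t2)" by (simp only: b(3) h[THEN conjunct1, symmetric] append_assoc)
      then show ?thesis by (rule L_I1[rotated]) simp
    qed
  qed
next
  fix s i j t1 t2 assume d1: "(s @ [i], s @ [j]) \<in> R" "x = s @ [i] @ t1" "y = s @ [j] @ t2"
  from yz[unfolded L_def] show ?thesis
  proof (elim disjE exE conjE)
    fix t assume t: "t \<noteq> []" "z = y @ t"
    have "z = s @ [j] @ (t2 @ t)" by (simp only: t(2) d1(3) append_assoc)
    from L_I2[OF d1(1) d1(2) this] show ?thesis .
  next
    fix s' i' j' t1' t2' assume d2: "(s' @ [i'], s' @ [j']) \<in> R" "y = s' @ [i'] @ t1'" "z = s' @ [j'] @ t2'"
    from d1(3)[symmetric] d2(2) have "s @ ([j] @ t2) = s' @ ([i'] @ t1')" by (rule trans)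
    note eq = this
    obtain us where "s = s' @ us \<and> us @ [j] @ t2 = [i'] @ t1' \<or> s @ us = s' \<and> [j] @ t2 = us @ [i'] @ t1'"
      using append_eq_append_conv2[THEN iffD1, OF eq] by (elim exE) (rule that)
    then show ?thesis
    proof
      assume h: "s = s' @ us \<and> us @ [j] @ t2 = [i'] @ t1'"
      show ?thesis
      proof (cases us)
        case Nil
        then have ss: "s = s'" "j = i'" using h by simp_all
        have "(s @ [j], s @ [j']) \<in> R" using d2(1) ss by simp
        from Rt[OF d1(1) this] have r: "(s @ [i], s @ [j']) \<in> R" .
        have "z = s @ [j'] @ t2'" using d2(3) ss by simp
        from L_I2[OF r d1(2) this] show ?thesis .
      next
        case (Cons c us')
        then have "c = i'" "s = s' @ (c # us')" using h by simp_all
        then have "x = s' @ [i'] @ (us' @ [i] @ t1)" using d1(2) by simp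
        from L_I2[OF d2(1) this d2(3)] show ?thesis .
      qed
    next
      assume h: "s @ us = s' \<and> [j] @ t2 = us @ [i'] @ t1'"
      show ?thesis
      proof (cases us)
        case Nil
        then have ss: "s = s'" "j = i'" using h by simp_all
        have "(s @ [j], s @ [j']) \<in> R" using d2(1) ss by simp
        from Rt[OF d1(1) this] have r: "(s @ [i], s @ [j']) \<in> R" .
        have "z = s @ [j'] @ t2'" using d2(3) ss by simp
        from L_I2[OF r d1(2) this] show ?thesis .
      next
        case (Cons c us')
        then have "c = j" "s @ (c # us') = s'" using h by simp_all
        then have "z = s @ [j] @ (us' @ [j'] @ t2')" using d2(3) by auto
        from L_I2[OF d1(1) d1(2) this] show ?thesis .
      qed
    qed
  qed
qed

lemma list_trichotomy:
  "x \<noteq> y \<Longrightarrow> (\<exists>t. t \<noteq> [] \<and> y = x @ t) \<or> (\<exists>t. t \<noteq> [] \<and> x = y @ t) \<or>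
     (\<exists>s i j t1 t2. i \<noteq> j \<and> x = s @ [i] @ t1 \<and> y = s @ [j] @ t2)"
proof (induction x arbitrary: y)
  case Nil then show ?case by auto
next
  case (Cons a x)
  show ?case
  proof (cases y)
    case Nil then show ?thesis by auto
  next
    case (Cons b y')
    show ?thesis
    proof (cases "a = b")
      case False
      have "a # x = [] @ [a] @ x" "y = [] @ [b] @ y'" using Cons by auto
      then show ?thesis using False by blast
    next
      case True
      then have "x \<noteq> y'" using Cons.prems Cons by simp
      from Cons.IH[OF this] show ?thesis
      proof (elim disjE exE conjE)
        fix t assume "t \<noteq> []" "y' = x @ t" then show ?thesis using Cons True by auto
      next
        fix t assume "t \<noteq> []" "x = y' @ t" then show ?thesis using Cons True by auto
      next
        fix s i j t1 t2 assume "i \<noteq> j" "x = s @ [i] @ t1" "y' = s @ [j] @ t2"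
        then have "a # x = (a # s) @ [i] @ t1" "y = (a # s) @ [j] @ t2" using Cons True by auto
        then show ?thesis using \<open>i \<noteq> j\<close> by blast
      qed
    qed
  qed
qed

lemma sib_struct:
  assumes "sibord_of T R" "(a, b) \<in> R"
  shows "\<exists>s i j. s \<in> dom_t T \<and> a = s @ [i] \<and> b = s @ [j] \<and> i \<noteq> j"
  using assms unfolding sibord_of_def by blast

lemma sib_irr: "sibord_of T R \<Longrightarrow> (a, a) \<notin> R"
  using sib_struct by fastforce

lemma sib_trans:
  assumes "is_utree T" "sibord_of T R" "(s @ [i], s @ [j]) \<in> R" "(s @ [j], s @ [k]) \<in> R"
  shows "(s @ [i], s @ [k]) \<in> R"
proof -
  have D: "s @ [i] \<in> dom_t T" "s @ [j] \<in> dom_t T" "s @ [k] \<in> dom_t T"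
    using assms(2-4) unfolding sibord_of_def by auto
  then have "s \<in> dom_t T" using pref_closed[OF assms(1)] by blast
  then have tr: "trans (R \<inter> (children (dom_t T) s \<times> children (dom_t T) s))"
    using assms(2) unfolding sibord_of_def strict_linear_order_on_def by blast
  have "s @ [i] \<in> children (dom_t T) s" "s @ [j] \<in> children (dom_t T) s" "s @ [k] \<in> children (dom_t T) s"
    using D unfolding children_def by auto
  then show ?thesis using tr assms(3,4) unfolding trans_def by blast
qed

lemma sib_tot:
  assumes "is_utree T" "sibord_of T R" "s @ [i] \<in> dom_t T" "s @ [j] \<in> dom_t T" "i \<noteq> j"
  shows "(s @ [i], s @ [j]) \<in> R \<or> (s @ [j], s @ [i]) \<in> R"
proof -
  have "s \<in> dom_t T" using pref_closed[OF assms(1)] assms(3) by blast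
  then have tt: "total_on (children (dom_t T) s) (R \<inter> (children (dom_t T) s \<times> children (dom_t T) s))"
    using assms(2) unfolding sibord_of_def strict_linear_order_on_def by blast
  have "s @ [i] \<in> children (dom_t T) s" "s @ [j] \<in> children (dom_t T) s"
    using assms(3,4) unfolding children_def by auto
  then show ?thesis using tt assms(5) unfolding total_on_def by blast
qed

lemma Q2_iff:
  assumes "sibord_of T R"
  shows "(u, w) \<in> Q2 (dom_t T) R \<longleftrightarrow> u \<in> dom_t T \<and> w \<in> dom_t T \<and> L R u w"
proof -
  have sub: "R \<subseteq> dom_t T \<times> dom_t T" using assms unfolding sibord_of_def by blast
  have e: "(a = u \<or> desc a u) \<longleftrightarrow> (\<exists>t. u = a @ t)" for a u
    unfolding desc_def by (metis append_Nil2)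
  show ?thesis
  proof
    assume "(u, w) \<in> Q2 (dom_t T) R"
    then have uw: "u \<in> dom_t T" "w \<in> dom_t T" and
      h: "desc u w \<or> (\<exists>a\<in>dom_t T. \<exists>b\<in>dom_t T. (a, b) \<in> R \<and> (\<exists>t. u = a @ t) \<and> (\<exists>t. w = b @ t))"
      unfolding Q2_def e by auto
    from h have "L R u w"
    proof
      assume "desc u w" then show ?thesis unfolding L_def desc_def by blast
    next
      assume "\<exists>a\<in>dom_t T. \<exists>b\<in>dom_t T. (a, b) \<in> R \<and> (\<exists>t. u = a @ t) \<and> (\<exists>t. w = b @ t)"
      then obtain a b t1 t2 where "(a, b) \<in> R" "u = a @ t1" "w = b @ t2" by blast
      moreover obtain s i j where "a = s @ [i]" "b = s @ [j]" using sib_struct[OF assms \<open>(a, b) \<in> R\<close>] by blast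
      ultimately have "(s @ [i], s @ [j]) \<in> R" "u = s @ [i] @ t1" "w = s @ [j] @ t2" by auto
      then show ?thesis unfolding L_def by blast
    qed
    then show "u \<in> dom_t T \<and> w \<in> dom_t T \<and> L R u w" using uw by blast
  next
    assume h: "u \<in> dom_t T \<and> w \<in> dom_t T \<and> L R u w"
    then have "desc u w \<or> (\<exists>a b. (a, b) \<in> R \<and> (\<exists>t. u = a @ t) \<and> (\<exists>t. w = b @ t))"
      unfolding L_def desc_def by force
    then have "desc u w \<or> (\<exists>a\<in>dom_t T. \<exists>b\<in>dom_t T. (a, b) \<in> R \<and> (a = u \<or> desc a u) \<and> (b = w \<or> desc b w))"
      using sub unfolding e by blast
    then show "(u, w) \<in> Q2 (dom_t T) R" using h unfolding Q2_def by blast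
  qed
qed

lemma lin_Q2:
  assumes T: "is_utree T" and S: "sibord_of T R"
  shows "linord_of T (Q2 (dom_t T) R)"
  unfolding linord_of_def strict_linear_order_on_def
proof (intro conjI)
  show "Q2 (dom_t T) R \<subseteq> dom_t T \<times> dom_t T" unfolding Q2_def by blast
  show "trans (Q2 (dom_t T) R)"
  proof (rule transI)
    fix x y z assume "(x, y) \<in> Q2 (dom_t T) R" "(y, z) \<in> Q2 (dom_t T) R"
    then have "x \<in> dom_t T" "z \<in> dom_t T" "L R x y" "L R y z" unfolding Q2_iff[OF S] by auto
    moreover have "L R x z" by (rule L_trans[OF sib_trans[OF T S] \<open>L R x y\<close> \<open>L R y z\<close>])
    ultimately show "(x, z) \<in> Q2 (dom_t T) R" unfolding Q2_iff[OF S] by blast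
  qed
  show "irrefl (Q2 (dom_t T) R)"
  proof (rule irreflI)
    fix a show "(a, a) \<notin> Q2 (dom_t T) R" unfolding Q2_iff[OF S] using L_irr[of R a, OF sib_irr[OF S]] by blast
  qed
  show "total_on (dom_t T) (Q2 (dom_t T) R)"
    unfolding total_on_def Q2_iff[OF S]
  proof (intro ballI impI)
    fix x y assume xy: "x \<in> dom_t T" "y \<in> dom_t T" "x \<noteq> y"
    from list_trichotomy[OF xy(3)] show "x \<in> dom_t T \<and> y \<in> dom_t T \<and> L R x y \<or> y \<in> dom_t T \<and> x \<in> dom_t T \<and> L R y x"
    proof (elim disjE exE conjE)
      fix t assume "t \<noteq> []" "y = x @ t"
      then have "L R x y" unfolding L_def by blast
      then show ?thesis using xy by blast
    next
      fix t assume "t \<noteq> []" "x = y @ t"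
      then have "L R y x" unfolding L_def by blast
      then show ?thesis using xy by blast
    next
      fix s i j t1 t2 assume h: "i \<noteq> j" "x = s @ [i] @ t1" "y = s @ [j] @ t2"
      have "(s @ [i]) @ t1 \<in> dom_t T" "(s @ [j]) @ t2 \<in> dom_t T" using xy h by simp_all
      then have "s @ [i] \<in> dom_t T" "s @ [j] \<in> dom_t T" by (auto intro: pref_closed[OF T])
      from sib_tot[OF T S this h(1)] have "L R x y \<or> L R y x"
      proof
        assume "(s @ [i], s @ [j]) \<in> R" then have "L R x y" using h unfolding L_def by blast
        then show ?thesis by blast
      next
        assume "(s @ [j], s @ [i]) \<in> R" then have "L R y x" using h unfolding L_def by blast
        then show ?thesis by blast
      qed
      then show ?thesis using xy by blast
    qed
  qed
qed


section \<open>Sibling orders from linear orders, and existence\<close>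

lemma sib_Q1:
  assumes T: "is_utree T" and L: "linord_of T R"
  shows "sibord_of T (Q1 R)"
proof -
  have sub: "R \<subseteq> dom_t T \<times> dom_t T" and tr: "trans R" and ir: "irrefl R" and tot: "total_on (dom_t T) R"
    using L unfolding linord_of_def strict_linear_order_on_def by auto
  have A: "Q1 R \<subseteq> dom_t T \<times> dom_t T" using sub unfolding Q1_def by auto
  have B: "\<exists>s i j. s \<in> dom_t T \<and> u = s @ [i] \<and> w = s @ [j] \<and> i \<noteq> j" if "(u, w) \<in> Q1 R" for u w
  proof -
    have "(u, w) \<in> R \<and> (\<exists>s i j. u = s @ [i] \<and> w = s @ [j] \<and> i \<noteq> j)"
      using that unfolding Q1_def by simp
    then obtain s i j where h: "(u, w) \<in> R" "u = s @ [i]" "w = s @ [j]" "i \<noteq> j"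
      by blast
    then have "s @ [i] \<in> dom_t T" using sub by auto
    then have "s \<in> dom_t T" by (rule pref_closed[OF T])
    then show ?thesis using h by blast
  qed
  have C: "strict_linear_order_on (children (dom_t T) s) (Q1 R \<inter> (children (dom_t T) s \<times> children (dom_t T) s))"
    for s
    unfolding strict_linear_order_on_def
  proof (intro conjI)
    show "trans (Q1 R \<inter> (children (dom_t T) s \<times> children (dom_t T) s))"
    proof (rule transI)
      fix a b c
      assume ab: "(a, b) \<in> Q1 R \<inter> (children (dom_t T) s \<times> children (dom_t T) s)"
        and bc: "(b, c) \<in> Q1 R \<inter> (children (dom_t T) s \<times> children (dom_t T) s)"
      have "(a, b) \<in> R" "(b, c) \<in> R" using ab bc unfolding Q1_def by auto
      then have ac: "(a, c) \<in> R" using tr unfolding trans_def by blast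
      then have "a \<noteq> c" using ir unfolding irrefl_def by blast
      moreover obtain i k where "a = s @ [i]" "c = s @ [k]" using ab bc unfolding children_def by auto
      ultimately have "(a, c) \<in> Q1 R" using ac unfolding Q1_def by auto
      then show "(a, c) \<in> Q1 R \<inter> (children (dom_t T) s \<times> children (dom_t T) s)" using ab bc by auto
    qed
    show "irrefl (Q1 R \<inter> (children (dom_t T) s \<times> children (dom_t T) s))"
      using ir unfolding irrefl_def Q1_def by auto
    show "total_on (children (dom_t T) s) (Q1 R \<inter> (children (dom_t T) s \<times> children (dom_t T) s))"
      unfolding total_on_def
    proof (intro ballI impI)
      fix a b assume a: "a \<in> children (dom_t T) s" and b: "b \<in> children (dom_t T) s" and ne: "a \<noteq> b"
      obtain i j where ij: "a = s @ [i]" "b = s @ [j]" "a \<in> dom_t T" "b \<in> dom_t T"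
        using a b unfolding children_def by auto
      then have "i \<noteq> j" using ne by auto
      from tot ij ne have "(a, b) \<in> R \<or> (b, a) \<in> R" unfolding total_on_def by blast
      then show "(a, b) \<in> Q1 R \<inter> (children (dom_t T) s \<times> children (dom_t T) s) \<or>
                 (b, a) \<in> Q1 R \<inter> (children (dom_t T) s \<times> children (dom_t T) s)"
        using ij \<open>i \<noteq> j\<close> a b unfolding Q1_def by auto
    qed
  qed
  show ?thesis unfolding sibord_of_def using A B C by blast
qed

definition R0 :: "nat list set \<Rightarrow> (nat list \<times> nat list) set" where
  "R0 D = {(u, w). \<exists>s i j. u = s @ [i] \<and> w = s @ [j] \<and> u \<in> D \<and> w \<in> D \<and> i < j}"

lemma sib_R0:
  assumes T: "is_utree T"
  shows "sibord_of T (R0 (dom_t T))"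
proof -
  have A: "R0 (dom_t T) \<subseteq> dom_t T \<times> dom_t T" unfolding R0_def by auto
  have B: "\<exists>s i j. s \<in> dom_t T \<and> u = s @ [i] \<and> w = s @ [j] \<and> i \<noteq> j" if "(u, w) \<in> R0 (dom_t T)" for u w
  proof -
    have "\<exists>s i j. u = s @ [i] \<and> w = s @ [j] \<and> u \<in> dom_t T \<and> w \<in> dom_t T \<and> i < j"
      using that unfolding R0_def by simp
    then obtain s i j where h: "u = s @ [i]" "w = s @ [j]" "u \<in> dom_t T" "i < j"
      by blast
    then have "s \<in> dom_t T" using pref_closed[OF T] by blast
    then show ?thesis using h by auto
  qed
  have C: "strict_linear_order_on (children (dom_t T) s)
      (R0 (dom_t T) \<inter> (children (dom_t T) s \<times> children (dom_t T) s))" for s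
    unfolding strict_linear_order_on_def
  proof (intro conjI)
    show "trans (R0 (dom_t T) \<inter> (children (dom_t T) s \<times> children (dom_t T) s))"
    proof (rule transI)
      fix a b c
      assume ab: "(a, b) \<in> R0 (dom_t T) \<inter> (children (dom_t T) s \<times> children (dom_t T) s)"
        and bc: "(b, c) \<in> R0 (dom_t T) \<inter> (children (dom_t T) s \<times> children (dom_t T) s)"
      obtain s1 i j where 1: "a = s1 @ [i]" "b = s1 @ [j]" "i < j" "a \<in> dom_t T"
        using ab unfolding R0_def by auto
      obtain s2 j' k where 2: "b = s2 @ [j']" "c = s2 @ [k]" "j' < k" "c \<in> dom_t T"
        using bc unfolding R0_def by auto
      have "s1 = s2" "j = j'" using 1(2) 2(1) by auto
      then have "(a, c) \<in> R0 (dom_t T)" using 1 2 unfolding R0_def by auto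
      then show "(a, c) \<in> R0 (dom_t T) \<inter> (children (dom_t T) s \<times> children (dom_t T) s)" using ab bc by auto
    qed
    show "irrefl (R0 (dom_t T) \<inter> (children (dom_t T) s \<times> children (dom_t T) s))"
      unfolding irrefl_def R0_def by auto
    show "total_on (children (dom_t T) s) (R0 (dom_t T) \<inter> (children (dom_t T) s \<times> children (dom_t T) s))"
      unfolding total_on_def
    proof (intro ballI impI)
      fix a b assume a: "a \<in> children (dom_t T) s" and b: "b \<in> children (dom_t T) s" and ne: "a \<noteq> b"
      obtain i j where ij: "a = s @ [i]" "b = s @ [j]" "a \<in> dom_t T" "b \<in> dom_t T"
        using a b unfolding children_def by auto
      then have "i < j \<or> j < i" using ne by auto
      then show "(a, b) \<in> R0 (dom_t T) \<inter> (children (dom_t T) s \<times> children (dom_t T) s) \<or>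
                 (b, a) \<in> R0 (dom_t T) \<inter> (children (dom_t T) s \<times> children (dom_t T) s)"
        using ij a b unfolding R0_def by blast
    qed
  qed
  show ?thesis unfolding sibord_of_def using A B C by blast
qed

lemma lin_exists: "is_utree T \<Longrightarrow> linord_of T (Q2 (dom_t T) (R0 (dom_t T)))"
  using lin_Q2 sib_R0 by blast

lemma models_docf: assumes T: "is_utree T"
  shows "models T R (trR docf \<phi>) = models T (Q2 (dom_t T) R) \<phi>"
  by (rule trR_models[OF T]) (rule sat_docf)

lemma models_sibf: assumes T: "is_utree T"
  shows "models T R (trR sibf \<phi>) = models T (Q1 R) \<phi>"
  by (rule trR_models[OF T]) (rule sat_sibf[OF T])

lemma sentence_docf: "sentence \<phi> \<Longrightarrow> sentence (trR docf \<phi>)"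
proof -
  have "fv1 (docf x y :: 'a mso) = {x, y} \<and> fv2 (docf x y :: 'a mso) = {}" for x y
    by (auto simp: docf_def)
  from trR_fv[of docf, OF this] show "sentence \<phi> \<Longrightarrow> sentence (trR docf \<phi>)"
    unfolding sentence_def by simp
qed

lemma sentence_sibf: "sentence \<phi> \<Longrightarrow> sentence (trR sibf \<phi>)"
proof -
  have "fv1 (sibf x y :: 'a mso) = {x, y} \<and> fv2 (sibf x y :: 'a mso) = {}" for x y
    by (auto simp: sibf_def Par_def)
  from trR_fv[of sibf, OF this] show "sentence \<phi> \<Longrightarrow> sentence (trR sibf \<phi>)"
    unfolding sentence_def by simp
qed

theorem lemma4p2:
  fixes S :: "('a::finite) utree set"
  shows "order_inv_definable S \<longleftrightarrow> sibling_inv_definable S"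
proof
  assume "order_inv_definable S"
  then obtain \<phi> :: "'a mso" where s: "sentence \<phi>" and inv: "order_invariant \<phi>"
    and S: "S = {T. is_utree T \<and> (\<exists>R. linord_of T R \<and> models T R \<phi>)}"
    unfolding order_inv_definable_def by blast
  have "sibling_invariant (trR docf \<phi>)"
    unfolding sibling_invariant_def
  proof (intro allI impI)
    fix T :: "'a utree" and R1 R2 assume T: "is_utree T" and r: "sibord_of T R1" "sibord_of T R2"
    show "models T R1 (trR docf \<phi>) = models T R2 (trR docf \<phi>)"
      unfolding models_docf[OF T] using inv T lin_Q2[OF T r(1)] lin_Q2[OF T r(2)]
      unfolding order_invariant_def by blast
  qed
  moreover have "S = {T. is_utree T \<and> (\<exists>R. sibord_of T R \<and> models T R (trR docf \<phi>))}"
    unfolding S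
  proof (intro Collect_cong conj_cong refl)
    fix T :: "'a utree" assume T: "is_utree T"
    show "(\<exists>R. linord_of T R \<and> models T R \<phi>) = (\<exists>R. sibord_of T R \<and> models T R (trR docf \<phi>))"
      unfolding models_docf[OF T]
    proof
      assume "\<exists>R. linord_of T R \<and> models T R \<phi>"
      then obtain R where "linord_of T R" "models T R \<phi>" by blast
      then have "models T (Q2 (dom_t T) (R0 (dom_t T))) \<phi>"
        using inv T lin_exists[OF T] unfolding order_invariant_def by blast
      then show "\<exists>R. sibord_of T R \<and> models T (Q2 (dom_t T) R) \<phi>" using sib_R0[OF T] by blast
    next
      assume "\<exists>R. sibord_of T R \<and> models T (Q2 (dom_t T) R) \<phi>"
      then show "\<exists>R. linord_of T R \<and> models T R \<phi>" using lin_Q2[OF T] by blast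
    qed
  qed
  ultimately show "sibling_inv_definable S"
    unfolding sibling_inv_definable_def using sentence_docf[OF s] by blast
next
  assume "sibling_inv_definable S"
  then obtain \<phi> :: "'a mso" where s: "sentence \<phi>" and inv: "sibling_invariant \<phi>"
    and S: "S = {T. is_utree T \<and> (\<exists>R. sibord_of T R \<and> models T R \<phi>)}"
    unfolding sibling_inv_definable_def by blast
  have "order_invariant (trR sibf \<phi>)"
    unfolding order_invariant_def
  proof (intro allI impI)
    fix T :: "'a utree" and R1 R2 assume T: "is_utree T" and r: "linord_of T R1" "linord_of T R2"
    show "models T R1 (trR sibf \<phi>) = models T R2 (trR sibf \<phi>)"
      unfolding models_sibf[OF T] using inv T sib_Q1[OF T r(1)] sib_Q1[OF T r(2)]
      unfolding sibling_invariant_def by blast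
  qed
  moreover have "S = {T. is_utree T \<and> (\<exists>R. linord_of T R \<and> models T R (trR sibf \<phi>))}"
    unfolding S
  proof (intro Collect_cong conj_cong refl)
    fix T :: "'a utree" assume T: "is_utree T"
    show "(\<exists>R. sibord_of T R \<and> models T R \<phi>) = (\<exists>R. linord_of T R \<and> models T R (trR sibf \<phi>))"
      unfolding models_sibf[OF T]
    proof
      assume "\<exists>R. sibord_of T R \<and> models T R \<phi>"
      then obtain R where "sibord_of T R" "models T R \<phi>" by blast
      then have "models T (Q1 (Q2 (dom_t T) (R0 (dom_t T)))) \<phi>"
        using inv T sib_Q1[OF T lin_exists[OF T]] unfolding sibling_invariant_def by blast
      then show "\<exists>R. linord_of T R \<and> models T (Q1 R) \<phi>" using lin_exists[OF T] by blast
    next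
      assume "\<exists>R. linord_of T R \<and> models T (Q1 R) \<phi>"
      then show "\<exists>R. sibord_of T R \<and> models T R \<phi>" using sib_Q1[OF T] by blast
    qed
  qed
  ultimately show "order_inv_definable S"
    unfolding order_inv_definable_def using sentence_sibf[OF s] by blast
qed

end
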